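(* For every integer $k\ge1$: (1) for every $(T,\mu)\in\mathcal M_k$, the root has at least one $1$-marked neighbor; (2) for every $(T,\mu)\in\mathcal M_k$ and every vertex $u$ of $T$, if $\mu(u)=1$ then $u$ is a leaf; (3) if $k\ge2$, each marked tree in $\mathcal M_k$ is obtained (by one of the two operations below) from exactly one marked tree in $\mathcal M_{k-1}$; (4) $|\mathcal M_k|=2^{k-1}$.
   Context: A marked tree is a pair $(T,\mu)$ with $T$ a rooted tree and $\mu:V(T)\to\{0,1\}$; marked trees are identified up to isomorphism of rooted marked trees. Define $\mathcal M_k$ (marked trees with $k$ edges) inductively: $\mathcal M_1=\{(T_1,\mu_1)\}$ where $T_1$ is a single edge, the root $v$ has $\mu_1(v)=0$ and its neighbor $u$ has $\mu_1(u)=1$. Given $\mathcal M_{k-1}$, $\mathcal M_k$ consists of all marked trees obtained from some element of $\mathcal M_{k-1}$ by exactly one of: (i) adding a new vertex $u$ with $\mu(u)=1$ as a neighbor of the root; (ii) choosing a $1$-marked neighbor $u$ of the root, making $u$ the new root with $\mu(u)=0$, and attaching a new $1$-marked leaf to $u$. Duplicates are included only once. *)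

theory Defs
  imports Main "HOL-Library.Multiset"
begin

text \<open>A rooted marked tree up to isomorphism of rooted marked trees is represented
canonically as an unordered tree: the mark of the root together with the multiset
of the (isomorphism classes of the) subtrees hanging at the children of the root.
The mark True stands for 1 and False for 0.\<close>

datatype mt = MT bool "mt multiset"

primrec mark :: "mt \<Rightarrow> bool" where
  "mark (MT b C) = b"

primrec children :: "mt \<Rightarrow> mt multiset" where
  "children (MT b C) = C"

text \<open>Multiset of (mark, degree) over all non-root vertices of a subtree hanging
below some parent (the degree counts the edge to the parent).\<close>
primrec nr_nodes :: "mt \<Rightarrow> (bool \<times> nat) multiset" where
  "nr_nodes (MT b C) = {#(b, size C + 1)#} + sum_mset (image_mset nr_nodes C)"

definition nodes :: "mt \<Rightarrow> (bool \<times> nat) multiset" where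
  "nodes t = {#(mark t, size (children t))#} + sum_mset (image_mset nr_nodes (children t))"

definition leaf1 :: mt where
  "leaf1 = MT True {#}"

definition op1 :: "mt \<Rightarrow> mt" where
  "op1 t = MT (mark t) (children t + {#leaf1#})"

text \<open>Operation (ii): for a 1-marked child u of the root, make u the new root with
mark 0 (the old root, with its remaining children, becomes a child of u) and attach
a new 1-marked leaf to u.\<close>
definition op2 :: "mt \<Rightarrow> mt \<Rightarrow> mt" where
  "op2 t u = MT False (children u + {#MT (mark t) (children t - {#u#}), leaf1#})"

definition obtained_from :: "mt \<Rightarrow> mt \<Rightarrow> bool" where
  "obtained_from t s \<longleftrightarrow>
     s = op1 t \<or> (\<exists>u. u \<in># children t \<and> mark u \<and> s = op2 t u)"

fun M :: "nat \<Rightarrow> mt set" where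
  "M 0 = {}"
| "M (Suc 0) = {MT False {#leaf1#}}"
| "M (Suc (Suc k)) = {s. \<exists>t \<in> M (Suc k). obtained_from t s}"

end

theory Submission
  imports Defs
begin

lemma in_sum_image: "x \<in># sum_mset (image_mset f C) \<Longrightarrow> \<exists>c\<in>#C. x \<in># f c"
  by (induction C) auto

definition P :: "mt \<Rightarrow> bool" where
  "P t \<longleftrightarrow> mark t = False \<and> leaf1 \<in># children t
     \<and> (\<forall>c\<in>#children t. mark c \<longrightarrow> c = leaf1)
     \<and> (\<forall>c\<in>#children t. \<forall>m d. (m,d) \<in># nr_nodes c \<longrightarrow> m \<longrightarrow> d = 1)"

lemma nr_leaf1: "nr_nodes leaf1 = {#(True,1)#}"
  by (simp add: leaf1_def)

lemma P_op1: "P t \<Longrightarrow> P (op1 t)"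
  unfolding P_def op1_def by (auto simp: nr_leaf1)

lemma P_op2: "P t \<Longrightarrow> P (op2 t leaf1)"
proof -
  assume a: "P t"
  define X where "X = children t - {#leaf1#}"
  have cl: "children leaf1 = {#}" "mark leaf1" by (auto simp: leaf1_def)
  have o: "op2 t leaf1 = MT False {#MT (mark t) X, leaf1#}"
    unfolding op2_def X_def cl by simp
  have mt: "mark t = False" using a unfolding P_def by simp
  have ne: "MT False X \<noteq> leaf1" by (simp add: leaf1_def)
  have X: "\<forall>c\<in>#X. \<forall>m d. (m,d) \<in># nr_nodes c \<longrightarrow> m \<longrightarrow> d = 1"
    using a unfolding P_def X_def by (auto dest: in_diffD)
  have "\<forall>m d. (m,d) \<in># nr_nodes (MT False X) \<longrightarrow> m \<longrightarrow> d = 1"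
  proof (intro allI impI)
    fix m d assume "(m,d) \<in># nr_nodes (MT False X)" "m"
    then have "(m,d) \<in># sum_mset (image_mset nr_nodes X)" by auto
    from in_sum_image[OF this] obtain c where "c \<in># X" "(m,d) \<in># nr_nodes c" ..
    then show "d = 1" using X \<open>m\<close> by blast
  qed
  note h = this
  show ?thesis unfolding P_def o mt
  proof (intro conjI ballI)
    show "leaf1 \<in># children (MT False {#MT False X, leaf1#})" by simp
  next
    fix c assume "c \<in># children (MT False {#MT False X, leaf1#})"
    then have c: "c = MT False X \<or> c = leaf1" by simp
    then show "mark c \<longrightarrow> c = leaf1" by auto
    show "\<forall>m d. (m, d) \<in># nr_nodes c \<longrightarrow> m \<longrightarrow> d = 1"
      using c h nr_leaf1 by auto
  qed simp
qed

lemma obt: "P t \<Longrightarrow> obtained_from t s \<longleftrightarrow> s = op1 t \<or> s = op2 t leaf1"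
proof -
  assume a: "P t"
  then have l: "leaf1 \<in># children t" and u: "\<And>u. u \<in># children t \<Longrightarrow> mark u \<Longrightarrow> u = leaf1"
    unfolding P_def by auto
  have m: "mark leaf1" by (simp add: leaf1_def)
  show ?thesis unfolding obtained_from_def
  proof
    assume "s = op1 t \<or> (\<exists>u. u \<in># children t \<and> mark u \<and> s = op2 t u)"
    then show "s = op1 t \<or> s = op2 t leaf1" using u by blast
  next
    assume "s = op1 t \<or> s = op2 t leaf1"
    then show "s = op1 t \<or> (\<exists>u. u \<in># children t \<and> mark u \<and> s = op2 t u)" using l m by blast
  qed
qed

lemma M_SS: "(\<forall>t\<in>M (Suc k). P t) \<Longrightarrow>
   M (Suc (Suc k)) = op1 ` M (Suc k) \<union> (\<lambda>t. op2 t leaf1) ` M (Suc k)"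
  using obt by auto

lemma P_M: "\<forall>t\<in>M (Suc k). P t"
proof (induction k)
  case 0
  then show ?case by (simp add: P_def leaf1_def)
next
  case (Suc k)
  then show ?case using M_SS[OF Suc] P_op1 P_op2 by auto
qed

lemma mt_eq: "t = MT (mark t) (children t)"
  by (cases t) auto

lemma op1_inj: "op1 t = op1 t' \<Longrightarrow> t = t'"
  unfolding op1_def by (metis mt.inject mt_eq add_right_cancel)

lemma op2_inj: "P t \<Longrightarrow> P t' \<Longrightarrow> op2 t leaf1 = op2 t' leaf1 \<Longrightarrow> t = t'"
proof -
  assume a: "P t" "P t'" "op2 t leaf1 = op2 t' leaf1"
  then have "children t - {#leaf1#} = children t' - {#leaf1#}"
    unfolding op2_def by (auto simp: leaf1_def P_def)
  then have "children t = children t'" using a(1,2) unfolding P_def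
    by (metis insert_DiffM)
  moreover have "mark t = mark t'" using a(1,2) unfolding P_def by simp
  ultimately show ?thesis using mt_eq[of t] mt_eq[of t'] by simp
qed

lemma op12: "P t \<Longrightarrow> P t' \<Longrightarrow> op1 t \<noteq> op2 t' leaf1"
proof
  assume a: "P t" "op1 t = op2 t' leaf1" and b: "P t'"
  have mb: "mark t' = False" using b by (simp add: P_def)
  have "count (children (op1 t)) leaf1 \<ge> 2" using a(1) unfolding P_def op1_def
    by (auto simp: Suc_le_eq)
  moreover have "count (children (op2 t' leaf1)) leaf1 = 1"
    unfolding op2_def mb by (simp add: leaf1_def)
  ultimately show False using a(2) by simp
qed

lemma finM: "finite (M k)"
proof (induction k rule: M.induct)
  case (3 k)
  then show ?case using M_SS[OF P_M] by simp
qed auto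

lemma cardM: "card (M (Suc k)) = 2 ^ k"
proof (induction k)
  case 0
  then show ?case by simp
next
  case (Suc k)
  have i1: "inj_on op1 (M (Suc k))" by (meson inj_onI op1_inj)
  have i2: "inj_on (\<lambda>t. op2 t leaf1) (M (Suc k))"
    by (rule inj_onI) (meson op2_inj P_M)
  have d: "op1 ` M (Suc k) \<inter> (\<lambda>t. op2 t leaf1) ` M (Suc k) = {}"
  proof (rule ccontr)
    assume "op1 ` M (Suc k) \<inter> (\<lambda>t. op2 t leaf1) ` M (Suc k) \<noteq> {}"
    then obtain t t' where "t \<in> M (Suc k)" "t' \<in> M (Suc k)" "op1 t = op2 t' leaf1" by auto
    then show False using op12 P_M by metis
  qed
  have "card (M (Suc (Suc k))) = card (op1 ` M (Suc k)) + card ((\<lambda>t. op2 t leaf1) ` M (Suc k))"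
    unfolding M_SS[OF P_M] by (rule card_Un_disjoint) (use finM d in auto)
  also have "\<dots> = 2 ^ Suc k" using Suc i1 i2 by (simp add: card_image)
  finally show ?case .
qed

theorem lemma8p2:
  fixes k :: nat
  assumes "k \<ge> 1"
  shows "(\<forall>t \<in> M k. \<exists>u. u \<in># children t \<and> mark u)
       \<and> (\<forall>t \<in> M k. \<forall>m d. (m, d) \<in># nodes t \<longrightarrow> m \<longrightarrow> d = 1)
       \<and> (k \<ge> 2 \<longrightarrow> (\<forall>s \<in> M k. \<exists>!t. t \<in> M (k - 1) \<and> obtained_from t s))
       \<and> card (M k) = 2 ^ (k - 1)"
proof -
  obtain j where k: "k = Suc j" using assms by (cases k) auto
  have A: "\<forall>t \<in> M k. \<exists>u. u \<in># children t \<and> mark u"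
    using P_M[of j] unfolding k P_def by (auto simp: leaf1_def)
  have B: "\<forall>t \<in> M k. \<forall>m d. (m, d) \<in># nodes t \<longrightarrow> m \<longrightarrow> d = 1"
    using P_M[of j] unfolding k P_def nodes_def by (auto dest!: in_sum_image)
  have C: "k \<ge> 2 \<longrightarrow> (\<forall>s \<in> M k. \<exists>!t. t \<in> M (k - 1) \<and> obtained_from t s)"
  proof (intro impI ballI)
    fix s assume "k \<ge> 2" "s \<in> M k"
    then obtain i where i: "k = Suc (Suc i)" by (metis add_2_eq_Suc le_Suc_ex)
    have ex: "\<exists>t. t \<in> M (k - 1) \<and> obtained_from t s" using \<open>s \<in> M k\<close> unfolding i by auto
    show "\<exists>!t. t \<in> M (k - 1) \<and> obtained_from t s"
    proof (rule ex_ex1I[OF ex])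
      fix t t' assume "t \<in> M (k - 1) \<and> obtained_from t s" "t' \<in> M (k - 1) \<and> obtained_from t' s"
      moreover have "\<forall>t\<in>M (k - 1). P t" using P_M[of i] unfolding i by simp
      ultimately show "t = t'" using obt op1_inj op2_inj op12 by metis
    qed
  qed
  show ?thesis using A B C cardM[of j] k by simp
qed

end
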